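(* Let $A,B\in\mathfrak{su}(2)$ satisfy $\operatorname{tr}(AB)=0$, and put $g:=\exp(A)$ and $h:=\exp(B)$. Then \[ gh=hg+h^{-1}g+hg^{-1}-\operatorname{tr}(hg)\,, \] where the scalar $\operatorname{tr}(hg)$ is understood as $\operatorname{tr}(hg)$ times the $2\times 2$ identity matrix.
   Context: $\mathfrak{su}(2)$ denotes the Lie algebra of traceless anti-Hermitian $2\times 2$ complex matrices, $\exp$ is the matrix exponential, and $\operatorname{tr}$ is the ordinary matrix trace. *)

theory Defs
  imports "HOL-Analysis.Analysis"
begin

primrec mpow :: "complex^2^2 \<Rightarrow> nat \<Rightarrow> complex^2^2" where
  "mpow A 0 = mat 1"
| "mpow A (Suc n) = A ** mpow A n"

definition mexp :: "complex^2^2 \<Rightarrow> complex^2^2" where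
  "mexp A = (\<Sum>n. (1 / fact n) *\<^sub>R mpow A n)"

definition adjoint_mat :: "complex^2^2 \<Rightarrow> complex^2^2" where
  "adjoint_mat A = (\<chi> i j. cnj (A $ j $ i))"

definition su2 :: "(complex^2^2) set" where
  "su2 = {A. adjoint_mat A = - A \<and> trace A = 0}"

end

theory Submission
  imports Defs
begin

definition lin :: "complex \<Rightarrow> complex \<Rightarrow> complex^2^2 \<Rightarrow> complex^2^2" where
  "lin a b A = (\<chi> i j. a * (if i = j then 1 else 0) + b * A$i$j)"

lemma mult_form:
  fixes A :: "complex^2^2"
  assumes tr: "A$1$1 + A$2$2 = 0" and mu: "mu^2 = -(A$1$1^2 + A$1$2*A$2$1)"
  shows "A ** lin a b A = lin (- b * mu^2) a A"
proof -
  have d: "A$2$2 = - A$1$1" using tr by (metis add.commute eq_neg_iff_add_eq_0)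
  have mm: "mu * mu = -(A$1$1 * A$1$1 + A$1$2*A$2$1)" using mu by (simp add: power2_eq_square)
  show ?thesis
    unfolding lin_def
    by (simp add: vec_eq_iff forall_2 matrix_matrix_mult_def sum_2 d power2_eq_square mm algebra_simps)
qed

lemma ca: "cos_coeff (Suc n) * fact (Suc n) = - (sin_coeff n * fact n)"
  by (simp add: cos_coeff_Suc del: fact_Suc) (simp add: fact_Suc)

lemma sa: "sin_coeff (Suc n) * fact (Suc n) = cos_coeff n * fact n"
  by (simp add: sin_coeff_Suc del: fact_Suc) (simp add: fact_Suc)

lemma mpow_form:
  fixes A :: "complex^2^2"
  assumes tr: "A$1$1 + A$2$2 = 0" and mu: "mu^2 = -(A$1$1^2 + A$1$2*A$2$1)"
  shows "mpow A n = lin (of_real (cos_coeff n * fact n) * mu^n) (of_real (sin_coeff n * fact n) * mu^(n-1)) A"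
proof (induction n)
  case 0
  then show ?case by (simp add: lin_def cos_coeff_def sin_coeff_def mat_def vec_eq_iff)
next
  case (Suc n)
  have e: "- (of_real (sin_coeff n * fact n) * mu^(n-1)) * mu^2 = of_real (- (sin_coeff n * fact n)) * mu^(Suc n)"
    by (cases n) (simp_all add: sin_coeff_def power2_eq_square)
  show ?case
    by (simp only: mpow.simps Suc mult_form[OF tr mu] ca sa e diff_Suc_1)
qed

lemma lin_sums:
  assumes "a sums a0" "b sums b0"
  shows "(\<lambda>n. lin (a n) (b n) A) sums lin a0 b0 A"
proof -
  have "(\<lambda>N. (\<Sum>n<N. lin (a n) (b n) A) $ i $ j) \<longlonglongrightarrow> lin a0 b0 A $ i $ j" for i j
  proof -
    have "(\<lambda>n. a n * (if i = j then 1 else 0) + b n * A$i$j) sums (a0 * (if i = j then 1 else 0) + b0 * A$i$j)"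
      by (intro sums_add sums_mult2 assms)
    thus ?thesis by (simp add: sums_def lin_def)
  qed
  then show ?thesis unfolding sums_def by (intro vec_tendstoI) auto
qed

lemma scaleR_lin: "c *\<^sub>R lin a b A = lin ((of_real c::complex) * a) (of_real c * b) A"
  unfolding lin_def by (simp add: vec_eq_iff) (simp add: scaleR_conv_of_real algebra_simps)

lemma summable_sinb: "summable (\<lambda>n. of_real (sin_coeff n) * (mu::complex)^(n-1))"
proof -
  have "summable (\<lambda>n. of_real (sin_coeff (Suc n)) * mu^n)"
  proof (rule summable_comparison_test)
    show "summable (\<lambda>n. inverse (fact n) * norm mu ^ n)" by (rule summable_exp)
    have "norm (of_real (sin_coeff (Suc n)) * mu^n) \<le> inverse (fact n) * norm mu ^ n" for n
    proof -
      have "\<bar>sin_coeff (Suc n)\<bar> \<le> inverse (fact n)"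
      proof -
        have c: "\<bar>cos_coeff n\<bar> \<le> inverse (fact n)"
          unfolding cos_coeff_def by (simp add: abs_mult power_abs divide_inverse)
        have "\<bar>sin_coeff (Suc n)\<bar> = \<bar>cos_coeff n\<bar> / real (Suc n)"
          by (simp add: sin_coeff_Suc abs_divide)
        also have "\<dots> \<le> \<bar>cos_coeff n\<bar>"
          by (simp add: divide_le_eq mult_le_cancel_left1 del: of_nat_Suc)
        finally show ?thesis using c by linarith
      qed
      then show ?thesis by (simp add: norm_mult norm_power mult_right_mono)
    qed
    then show "\<exists>N. \<forall>n\<ge>N. norm (of_real (sin_coeff (Suc n)) * mu^n) \<le> inverse (fact n) * norm mu ^ n"
      by blast
  qed
  then show ?thesis by (subst summable_Suc_iff[symmetric]) simp
qed

lemma mexp_form: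
  fixes A :: "complex^2^2"
  assumes tr: "A$1$1 + A$2$2 = 0" and mu: "mu^2 = -(A$1$1^2 + A$1$2*A$2$1)"
  shows "mexp A = lin (cos mu) (\<Sum>n. of_real (sin_coeff n) * mu^(n-1)) A"
proof -
  have "(\<lambda>n. (1 / fact n) *\<^sub>R mpow A n) = (\<lambda>n. lin (cos_coeff n *\<^sub>R mu^n) (of_real (sin_coeff n) * mu^(n-1)) A)"
    by (rule ext) (simp only: mpow_form[OF tr mu] scaleR_lin, simp add: scaleR_conv_of_real)
  moreover have "(\<lambda>n. lin (cos_coeff n *\<^sub>R mu^n) (of_real (sin_coeff n) * mu^(n-1)) A) sums
     lin (cos mu) (\<Sum>n. of_real (sin_coeff n) * mu^(n-1)) A"
    by (intro lin_sums cos_converges summable_sums summable_sinb)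
  ultimately show ?thesis unfolding mexp_def by (simp add: sums_iff)
qed

lemma det_one: "(cos mu)^2 + mu^2 * (\<Sum>n. of_real (sin_coeff n) * (mu::complex)^(n-1))^2 = 1"
proof -
  let ?s = "\<Sum>n. of_real (sin_coeff n) * (mu::complex)^(n-1)"
  have "(\<lambda>n. of_real (sin_coeff n) * mu^(n-1) * mu) sums (?s * mu)"
    by (intro sums_mult2 summable_sums summable_sinb)
  moreover have "(\<lambda>n. of_real (sin_coeff n) * mu^(n-1) * mu) = (\<lambda>n. sin_coeff n *\<^sub>R mu^n)"
  proof
    fix n show "of_real (sin_coeff n) * mu^(n-1) * mu = sin_coeff n *\<^sub>R mu^n"
      by (cases n) (simp_all add: sin_coeff_def scaleR_conv_of_real mult_ac)
  qed
  ultimately have "?s * mu = sin mu" using sin_converges sums_unique2 by metis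
  then have "mu^2 * ?s^2 = (sin mu)^2" by (metis power_mult_distrib mult.commute)
  then show ?thesis using sin_cos_squared_add[of mu] by (simp add: add.commute)
qed

lemma lin_inv:
  fixes A :: "complex^2^2"
  assumes tr: "A$1$1 + A$2$2 = 0" and mu: "mu^2 = -(A$1$1^2 + A$1$2*A$2$1)"
    and d: "c^2 + mu^2 * s^2 = 1"
  shows "matrix_inv (lin c s A) = lin c (-s) A"
proof -
  have d2: "A$2$2 = - A$1$1" using tr by (metis add.commute eq_neg_iff_add_eq_0)
  have 1: "lin c s A ** lin c (-s) A = mat 1"
    unfolding lin_def
    apply (simp add: vec_eq_iff forall_2 matrix_matrix_mult_def sum_2 d2 mat_def)
    using mu d by algebra
  have 2: "lin c (-s) A ** lin c s A = mat 1"
    unfolding lin_def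
    apply (simp add: vec_eq_iff forall_2 matrix_matrix_mult_def sum_2 d2 mat_def)
    using mu d by algebra
  let ?M = "lin c s A"
  have "\<exists>X. ?M ** X = mat 1 \<and> X ** ?M = mat 1" using 1 2 by blast
  then have h: "?M ** matrix_inv ?M = mat 1 \<and> matrix_inv ?M ** ?M = mat 1"
    unfolding matrix_inv_def by (rule someI_ex)
  have "matrix_inv ?M = matrix_inv ?M ** (?M ** lin c (-s) A)" using 1 by simp
  also have "\<dots> = lin c (-s) A" using h by (simp add: matrix_mul_assoc)
  finally show ?thesis .
qed

lemma final:
  fixes A B :: "complex^2^2"
  assumes ta: "A$1$1 + A$2$2 = 0" and tb: "B$1$1 + B$2$2 = 0"
    and tab: "trace (A ** B) = 0"
  shows "lin c1 s1 A ** lin c2 s2 B = lin c2 s2 B ** lin c1 s1 A + lin c2 (-s2) B ** lin c1 s1 A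
     + lin c2 s2 B ** lin c1 (-s1) A - mat (trace (lin c2 s2 B ** lin c1 s1 A))"
proof -
  have a2: "A$2$2 = - A$1$1" using ta by (metis add.commute eq_neg_iff_add_eq_0)
  have b2: "B$2$2 = - B$1$1" using tb by (metis add.commute eq_neg_iff_add_eq_0)
  have t: "A$1$1 * B$1$1 + A$1$2 * B$2$1 + (A$2$1 * B$1$2 + A$1$1 * B$1$1) = 0"
    using tab by (simp add: trace_def sum_2 matrix_matrix_mult_def a2 b2)
  show ?thesis
    unfolding lin_def
    apply (simp add: vec_eq_iff forall_2 matrix_matrix_mult_def sum_2 a2 b2 mat_def trace_def)
    using t by algebra
qed

lemma su2_form:
  assumes "A \<in> su2"
  obtains mu :: complex where "A$1$1 + A$2$2 = 0" "mu^2 = -(A$1$1^2 + A$1$2*A$2$1)"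
proof -
  have "trace A = 0" using assms by (simp add: su2_def)
  then have "A$1$1 + A$2$2 = 0" by (simp add: trace_def sum_2)
  then show ?thesis using that[of "csqrt (-(A$1$1^2 + A$1$2*A$2$1))"] by simp
qed

theorem lemma1:
  fixes A B :: "complex^2^2"
  assumes "A \<in> su2" and "B \<in> su2" and "trace (A ** B) = 0"
  shows "mexp A ** mexp B
    = mexp B ** mexp A + matrix_inv (mexp B) ** mexp A + mexp B ** matrix_inv (mexp A)
      - mat (trace (mexp B ** mexp A))"
proof -
  obtain mu where ta: "A$1$1 + A$2$2 = 0" and mu: "mu^2 = -(A$1$1^2 + A$1$2*A$2$1)"
    using su2_form[OF assms(1)] by blast
  obtain nu where tb: "B$1$1 + B$2$2 = 0" and nu: "nu^2 = -(B$1$1^2 + B$1$2*B$2$1)"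
    using su2_form[OF assms(2)] by blast
  define s1 where "s1 = (\<Sum>n. of_real (sin_coeff n) * mu^(n-1))"
  define s2 where "s2 = (\<Sum>n. of_real (sin_coeff n) * nu^(n-1))"
  have eA: "mexp A = lin (cos mu) s1 A" unfolding s1_def by (rule mexp_form[OF ta mu])
  have eB: "mexp B = lin (cos nu) s2 B" unfolding s2_def by (rule mexp_form[OF tb nu])
  have iA: "matrix_inv (mexp A) = lin (cos mu) (-s1) A"
    unfolding eA by (rule lin_inv[OF ta mu]) (unfold s1_def, rule det_one)
  have iB: "matrix_inv (mexp B) = lin (cos nu) (-s2) B"
    unfolding eB by (rule lin_inv[OF tb nu]) (unfold s2_def, rule det_one)
  show ?thesis unfolding iA iB unfolding eA eB by (rule final[OF ta tb assms(3)])
qed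

end
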